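(* Let $C>0$ and let $Q,\widehat Q$ be probability measures supported on $B:=\{x\in\mathbb{R}^d:\|x\|_2\le C\}$. Let $a:B\to[0,1]$ satisfy $a(x)\ge a_0>0$ for all $x\in B$, and suppose $a$ is $L_a$-Lipschitz. Define the reweighted laws $$\mathcal R_a(Q)(dx):=\frac{a(x)}{\mathbb E_Q[a(X)]}Q(dx),\qquad \mathcal R_a(\widehat Q)(dx):=\frac{a(x)}{\mathbb E_{\widehat Q}[a(X)]}\widehat Q(dx).$$ Then $$\mathcal W_2(\mathcal R_a(Q),\mathcal R_a(\widehat Q))\le\sqrt{\frac{2C(1+2CL_a)}{a_0}\,\mathcal W_2(Q,\widehat Q)}.$$
   Context: $\mathcal W_2$ is the Wasserstein-2 distance with Euclidean cost. *)

theory Defs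
  imports "HOL-Probability.Probability"
begin

definition couplings :: "'a::euclidean_space measure \<Rightarrow> 'a measure \<Rightarrow> ('a \<times> 'a) measure set" where
  "couplings M N = {K. sets K = sets borel \<and> prob_space K \<and>
                        distr K borel fst = M \<and> distr K borel snd = N}"

definition W2 :: "'a::euclidean_space measure \<Rightarrow> 'a measure \<Rightarrow> real" where
  "W2 M N = sqrt (enn2real (INF K \<in> couplings M N.
       \<integral>\<^sup>+ z. ennreal ((dist (fst z) (snd z))\<^sup>2) \<partial>K))"

definition reweight :: "('a \<Rightarrow> real) \<Rightarrow> 'a measure \<Rightarrow> 'a measure" where
  "reweight a Q = density Q (\<lambda>x. ennreal (a x / (\<integral>y. a y \<partial>Q)))"

end

theory Submission
  imports Defs
begin



definition msum :: "'b measure \<Rightarrow> 'b measure \<Rightarrow> 'b measure" where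
  "msum M N = bind (count_space UNIV) (\<lambda>b::bool. if b then M else N)"

lemma msum_kernel:
  assumes "sets M = sets L" "sets N = sets L" "subprob_space M" "subprob_space N"
  shows "(\<lambda>b::bool. if b then M else N) \<in> measurable (count_space UNIV) (subprob_algebra L)"
    using assms by (auto simp: measurable_count_space_eq1 space_subprob_algebra)

lemma sets_msum:
  assumes "sets M = sets L" "sets N = sets L" "subprob_space M" "subprob_space N"
  shows "sets (msum M N) = sets L"
  unfolding msum_def using assms by (subst sets_bind) auto

lemma nn_integral_msum:
  fixes f :: "'b \<Rightarrow> ennreal"
  assumes "sets M = sets L" "sets N = sets L" "subprob_space M" "subprob_space N"
    and f: "f \<in> borel_measurable L"
  shows "(\<integral>\<^sup>+x. f x \<partial>msum M N) = (\<integral>\<^sup>+x. f x \<partial>M) + (\<integral>\<^sup>+x. f x \<partial>N)"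
    unfolding msum_def nn_integral_bind[OF f msum_kernel[OF assms(1-4)]]
    by (simp add: nn_integral_count_space_finite UNIV_bool add.commute)



lemma fst_borel[measurable]: "fst \<in> borel_measurable (borel :: ('a::second_countable_topology \<times> 'b::second_countable_topology) measure)"
  by (simp add: borel_prod[symmetric])
lemma snd_borel[measurable]: "snd \<in> borel_measurable (borel :: ('a::second_countable_topology \<times> 'b::second_countable_topology) measure)"
  by (simp add: borel_prod[symmetric])

locale B7 =
  fixes Q Qh :: "'a::euclidean_space measure" and a :: "'a \<Rightarrow> real"
    and C a0 La :: real and P :: "('a \<times> 'a) measure"
  assumes C: "C > 0" and Q: "prob_space Q" and sQ[measurable_cong]: "sets Q = sets borel"
    and Qh: "prob_space Qh" and sQh[measurable_cong]: "sets Qh = sets borel"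
    and suppQ: "AE x in Q. x \<in> cball 0 C" and suppQh: "AE x in Qh. x \<in> cball 0 C"
    and a_meas[measurable]: "a \<in> borel_measurable borel"
    and a_lo: "\<And>x. a0 \<le> a x" and a_hi: "\<And>x. a x \<le> 1" and a0: "a0 > 0"
    and lip: "La-lipschitz_on (cball 0 C) a"
    and P: "P \<in> couplings Q Qh"
begin

lemma sP[measurable_cong]: "sets P = sets borel" and probP: "prob_space P"
  and margQ: "distr P borel fst = Q" and margQh: "distr P borel snd = Qh"
  using P by (auto simp: couplings_def)

interpretation P: prob_space P by (rule probP)
interpretation Q: prob_space Q by (rule Q)
interpretation Qh: prob_space Qh by (rule Qh)

lemma nn_fst: "u \<in> borel_measurable borel \<Longrightarrow> (\<integral>\<^sup>+z. u (fst z) \<partial>P) = (\<integral>\<^sup>+x. u x \<partial>Q)"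
  by (subst margQ[symmetric], subst nn_integral_distr) auto
lemma nn_snd: "u \<in> borel_measurable borel \<Longrightarrow> (\<integral>\<^sup>+z. u (snd z) \<partial>P) = (\<integral>\<^sup>+x. u x \<partial>Qh)"
  by (subst margQh[symmetric], subst nn_integral_distr) auto
lemma int_fst: "(u::'a\<Rightarrow>real) \<in> borel_measurable borel \<Longrightarrow> (\<integral>z. u (fst z) \<partial>P) = (\<integral>x. u x \<partial>Q)"
  by (subst margQ[symmetric], subst integral_distr) auto
lemma int_snd: "(u::'a\<Rightarrow>real) \<in> borel_measurable borel \<Longrightarrow> (\<integral>z. u (snd z) \<partial>P) = (\<integral>x. u x \<partial>Qh)"
  by (subst margQh[symmetric], subst integral_distr) auto

lemma AE_ball: "AE z in P. fst z \<in> cball 0 C \<and> snd z \<in> cball 0 C"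
proof -
  have "AE z in P. fst z \<in> cball 0 C"
    using suppQ unfolding margQ[symmetric] by (subst (asm) AE_distr_iff) auto
  moreover have "AE z in P. snd z \<in> cball 0 C"
    using suppQh unfolding margQh[symmetric] by (subst (asm) AE_distr_iff) auto
  ultimately show ?thesis by auto
qed

lemma AE_dist: "AE z in P. dist (fst z) (snd z) \<le> 2 * C"
  using AE_ball
proof eventually_elim
  case (elim z)
  have "dist (fst z) (snd z) \<le> dist (fst z) 0 + dist 0 (snd z)" by (rule dist_triangle)
  also have "\<dots> \<le> C + C" using elim by (auto simp: dist_commute)
  finally show ?case by simp
qed

definition "Z = (\<integral>x. a x \<partial>Q)"
definition "Zh = (\<integral>x. a x \<partial>Qh)"

lemma a_pos: "0 < a x" using a_lo[of x] a0 by linarith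

lemma a_int: "integrable Q a" "integrable Qh a"
  by (auto intro!: Q.integrable_const_bound[where B=1] Qh.integrable_const_bound[where B=1]
      simp: abs_le_iff a_hi less_imp_le[OF a_pos] intro: order_trans[OF _ less_imp_le[OF a_pos]])

lemma Z_bnd: "a0 \<le> Z" "Z \<le> 1" "a0 \<le> Zh" "Zh \<le> 1"
  unfolding Z_def Zh_def
  by (auto intro!: Q.integral_ge_const Q.integral_le_const Qh.integral_ge_const Qh.integral_le_const
      a_int a_lo a_hi)


lemma Z_pos: "0 < Z" "0 < Zh" using Z_bnd a0 by auto

lemma af[measurable]: "(\<lambda>x. a (fst x)) \<in> borel_measurable (borel::('a\<times>'a) measure)"
  by (rule measurable_compose[OF fst_borel a_meas])
lemma as[measurable]: "(\<lambda>x. a (snd x)) \<in> borel_measurable (borel::('a\<times>'a) measure)"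
  by (rule measurable_compose[OF snd_borel a_meas])

definition u :: "'a \<times> 'a \<Rightarrow> real" where "u z = a (fst z) / Z"
definition v :: "'a \<times> 'a \<Rightarrow> real" where "v z = a (snd z) / Zh"
definition w :: "'a \<times> 'a \<Rightarrow> real" where "w z = min (u z) (v z)"
definition h1 :: "'a \<times> 'a \<Rightarrow> real" where "h1 z = u z - w z"
definition h2 :: "'a \<times> 'a \<Rightarrow> real" where "h2 z = v z - w z"

lemma meas[measurable]: "u \<in> borel_measurable borel" "v \<in> borel_measurable borel"
  "w \<in> borel_measurable borel" "h1 \<in> borel_measurable borel" "h2 \<in> borel_measurable borel"
  unfolding u_def[abs_def] v_def[abs_def] w_def[abs_def] h1_def[abs_def] h2_def[abs_def]
  by (auto intro!: borel_measurable_min borel_measurable_diff borel_measurable_divide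
      af as)

lemma uv_bnd: "0 \<le> u z" "u z \<le> 1/a0" "0 \<le> v z" "v z \<le> 1/a0"
  "0 \<le> w z" "w z \<le> u z" "w z \<le> v z" "0 \<le> h1 z" "0 \<le> h2 z" "h1 z + h2 z = \<bar>u z - v z\<bar>"
proof -
  have "a (fst z) / Z \<le> 1 / a0" using a_hi Z_bnd Z_pos a0 a_pos
    by (intro frac_le) auto
  moreover have "a (snd z) / Zh \<le> 1 / a0" using a_hi Z_bnd Z_pos a0 a_pos
    by (intro frac_le) auto
  ultimately show "0 \<le> u z" "u z \<le> 1/a0" "0 \<le> v z" "v z \<le> 1/a0"
  "0 \<le> w z" "w z \<le> u z" "w z \<le> v z" "0 \<le> h1 z" "0 \<le> h2 z" "h1 z + h2 z = \<bar>u z - v z\<bar>"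
    using Z_pos a_pos[of "fst z"] a_pos[of "snd z"]
    by (auto simp: u_def v_def w_def h1_def h2_def)
qed

lemma integrable_bnd: "f \<in> borel_measurable borel \<Longrightarrow> (\<And>z. \<bar>f z\<bar> \<le> B) \<Longrightarrow> integrable P (f::_\<Rightarrow>real)"
  by (rule P.integrable_const_bound[where B=B]) auto

lemma ints[simp]: "integrable P u" "integrable P v" "integrable P w" "integrable P h1" "integrable P h2"
  using uv_bnd
  by (auto intro!: integrable_bnd[where B="1/a0"]) (smt (verit))+

lemma int_u: "(\<integral>z. u z \<partial>P) = 1"
  unfolding u_def using int_fst[of "\<lambda>x. a x / Z"] Z_pos by (simp add: Z_def)
lemma int_v: "(\<integral>z. v z \<partial>P) = 1"
  unfolding v_def using int_snd[of "\<lambda>x. a x / Zh"] Z_pos by (simp add: Zh_def)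

definition "m = (\<integral>z. h1 z \<partial>P)"

lemma m_h2: "(\<integral>z. h2 z \<partial>P) = m"
proof -
  have "(\<integral>z. h1 z \<partial>P) = 1 - (\<integral>z. w z \<partial>P)"
    unfolding h1_def using int_u by (subst Bochner_Integration.integral_diff) auto
  moreover have "(\<integral>z. h2 z \<partial>P) = 1 - (\<integral>z. w z \<partial>P)"
    unfolding h2_def using int_v by (subst Bochner_Integration.integral_diff) auto
  ultimately show ?thesis by (simp add: m_def)
qed

lemma m_nn: "0 \<le> m" unfolding m_def using uv_bnd by (simp add: integral_nonneg)

lemma nn_h1: "(\<integral>\<^sup>+z. ennreal (h1 z) \<partial>P) = ennreal m"
  unfolding m_def using uv_bnd by (subst nn_integral_eq_integral) auto
lemma nn_h2: "(\<integral>\<^sup>+z. ennreal (h2 z) \<partial>P) = ennreal m"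
  unfolding m_h2[symmetric] using uv_bnd by (subst nn_integral_eq_integral) auto

lemma m0_AE: "m = 0 \<Longrightarrow> AE z in P. h1 z = 0 \<and> h2 z = 0"
proof -
  assume "m = 0"
  then have "AE z in P. h1 z = 0"
    using uv_bnd unfolding m_def
    by (subst (asm) integral_nonneg_eq_0_iff_AE) auto
  moreover have "(\<integral>z. h2 z \<partial>P) = 0" using m_h2 \<open>m = 0\<close> by simp
  then have "AE z in P. h2 z = 0"
    using uv_bnd by (subst (asm) integral_nonneg_eq_0_iff_AE) auto
  ultimately show ?thesis by eventually_elim auto
qed

definition dd :: "'a \<times> 'a \<Rightarrow> real" where "dd z = dist (fst z) (snd z)"
lemma dd_meas[measurable]: "dd \<in> borel_measurable borel"
  unfolding dd_def[abs_def] by (intro borel_measurable_dist fst_borel snd_borel)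
lemma dd_nn: "0 \<le> dd z" by (simp add: dd_def)
lemma dd_AE: "AE z in P. dd z \<le> 2 * C" using AE_dist by (simp add: dd_def)
lemma dd_int[simp]: "integrable P dd"
  by (rule P.integrable_const_bound[where B="2*C"]) (use dd_AE in \<open>auto simp: dd_nn\<close>)
definition "D = (\<integral>z. dd z \<partial>P)"
lemma D_nn: "0 \<le> D" unfolding D_def by (simp add: integral_nonneg dd_nn)

definition A :: "'a \<times> 'a \<Rightarrow> real" where "A z = \<bar>a (fst z) - a (snd z)\<bar>"
lemma A_meas[measurable]: "A \<in> borel_measurable borel"
  unfolding A_def[abs_def] by (intro borel_measurable_abs borel_measurable_diff af as)
lemma A_int[simp]: "integrable P A"
proof -
  have "\<And>z. norm (A z) \<le> 1" unfolding A_def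
    using a_hi a_pos by (smt (verit) real_norm_def)
  then show ?thesis by (intro P.integrable_const_bound[where B="1"]) auto
qed
lemma La_nn: "0 \<le> La" using lip by (rule lipschitz_on_nonneg)
lemma A_AE: "AE z in P. A z \<le> La * dd z"
  using AE_ball
proof eventually_elim
  case (elim z)
  then show ?case using lipschitz_onD[OF lip, of "fst z" "snd z"]
    by (simp add: A_def dd_def dist_real_def)
qed
lemma IA: "(\<integral>z. A z \<partial>P) \<le> La * D"
proof -
  have "(\<integral>z. A z \<partial>P) \<le> (\<integral>z. La * dd z \<partial>P)"
    by (rule integral_mono_AE) (use A_AE in auto)
  then show ?thesis by (simp add: D_def)
qed
lemma ZZh: "\<bar>Z - Zh\<bar> \<le> (\<integral>z. A z \<partial>P)"
proof -
  have iaf: "integrable P (\<lambda>z. a (fst z))" "integrable P (\<lambda>z. a (snd z))"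
    by (auto intro!: P.integrable_const_bound[where B=1] simp: abs_le_iff a_hi less_imp_le[OF a_pos] intro: order_trans[OF _ less_imp_le[OF a_pos]])
  have "Z - Zh = (\<integral>z. a (fst z) - a (snd z) \<partial>P)"
    using int_fst[of a] int_snd[of a] iaf by (simp add: Z_def Zh_def)
  also have "\<bar>\<dots>\<bar> \<le> (\<integral>z. \<bar>a (fst z) - a (snd z)\<bar> \<partial>P)"
    by (rule integral_abs_bound)
  finally show ?thesis by (simp add: A_def[abs_def])
qed

lemma uv_diff: "\<bar>u z - v z\<bar> \<le> A z / Z + a (snd z) * (\<bar>Z - Zh\<bar> / (Z * Zh))"
proof -
  have "u z - v z = (a (fst z) - a (snd z)) / Z + a (snd z) * ((Zh - Z) / (Z * Zh))"
    using Z_pos by (simp add: u_def v_def field_simps)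
  also have "\<bar>\<dots>\<bar> \<le> \<bar>(a (fst z) - a (snd z)) / Z\<bar> + \<bar>a (snd z) * ((Zh - Z) / (Z * Zh))\<bar>"
    by (rule abs_triangle_ineq)
  also have "\<dots> = A z / Z + a (snd z) * (\<bar>Z - Zh\<bar> / (Z * Zh))"
    using Z_pos a_pos[of "snd z"] by (simp add: A_def abs_mult abs_divide abs_minus_commute)
  finally show ?thesis .
qed

lemma m_bound: "m \<le> La * D / a0"
proof -
  have iaf: "integrable P (\<lambda>z. a (snd z))"
    by (auto intro!: P.integrable_const_bound[where B=1] simp: abs_le_iff a_hi less_imp_le[OF a_pos] intro: order_trans[OF _ less_imp_le[OF a_pos]])
  have "2 * m = (\<integral>z. h1 z + h2 z \<partial>P)" using m_h2 by (simp add: m_def)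
  also have "\<dots> = (\<integral>z. \<bar>u z - v z\<bar> \<partial>P)" using uv_bnd by simp
  also have "\<dots> \<le> (\<integral>z. A z / Z + a (snd z) * (\<bar>Z - Zh\<bar> / (Z * Zh)) \<partial>P)"
    by (rule integral_mono) (use iaf uv_diff in auto)
  also have "\<dots> = (\<integral>z. A z \<partial>P) / Z + Zh * (\<bar>Z - Zh\<bar> / (Z * Zh))"
    using iaf int_snd[of a] by (simp add: Zh_def)
  also have "\<dots> = (\<integral>z. A z \<partial>P) / Z + \<bar>Z - Zh\<bar> / Z"
    using Z_pos by simp
  also have "\<dots> \<le> 2 * (La * D) / Z"
    using IA ZZh Z_pos by (simp add: divide_right_mono add_divide_distrib[symmetric])
  also have "\<dots> \<le> 2 * (La * D) / a0"
    using Z_bnd a0 La_nn D_nn by (intro divide_left_mono) auto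
  finally show ?thesis by simp
qed

lemma sPP[measurable_cong]: "sets (P \<Otimes>\<^sub>M P) = sets (borel \<Otimes>\<^sub>M borel)"
  by (intro sets_pair_measure_cong sP)

lemma T_meas[measurable]: "(\<lambda>p. (fst (fst p), snd (snd p))) \<in> (P \<Otimes>\<^sub>M P) \<rightarrow>\<^sub>M (borel::('a\<times>'a) measure)"
proof -
  have "(\<lambda>p. (fst (fst p), snd (snd p))) \<in> (P \<Otimes>\<^sub>M P) \<rightarrow>\<^sub>M (borel \<Otimes>\<^sub>M borel)"
    by measurable
  then show ?thesis by (simp add: borel_prod)
qed

definition "g1 = density P (\<lambda>z. ennreal (w z))"
definition "g2 = distr (density (P \<Otimes>\<^sub>M P) (\<lambda>p. ennreal (h1 (fst p) * h2 (snd p) / m))) borel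
   (\<lambda>p. (fst (fst p), snd (snd p)))"

lemma sets_g[measurable_cong]: "sets g1 = sets borel" "sets g2 = sets borel"
  by (auto simp: g1_def g2_def sP)

lemma nn_g1: "f \<in> borel_measurable borel \<Longrightarrow> (\<integral>\<^sup>+z. f z \<partial>g1) = (\<integral>\<^sup>+z. ennreal (w z) * f z \<partial>P)"
  unfolding g1_def by (subst nn_integral_density) auto

lemma nn_g2: "f \<in> borel_measurable borel \<Longrightarrow> (\<integral>\<^sup>+z. f z \<partial>g2) =
   (\<integral>\<^sup>+z1. \<integral>\<^sup>+z2. ennreal (h1 z1 * h2 z2 / m) * f (fst z1, snd z2) \<partial>P \<partial>P)"
proof -
  assume f[measurable]: "f \<in> borel_measurable borel"
  have fT: "(\<lambda>x. f (fst (fst x), snd (snd x))) \<in> borel_measurable (P \<Otimes>\<^sub>M P)"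
    using measurable_compose[OF T_meas f] .
  have dm: "(\<lambda>p. ennreal (h1 (fst p) * h2 (snd p) / m)) \<in> borel_measurable (P \<Otimes>\<^sub>M P)"
    by measurable
  show ?thesis
    unfolding g2_def
    apply (subst nn_integral_distr)
      apply (simp add: T_meas)
     apply (simp add: measurable_cong_sets[OF sets_distr refl])
    apply (subst nn_integral_density)
      apply (rule dm)
     apply (simp add: fT)
    apply (subst P.nn_integral_fst[symmetric])
     apply (rule borel_measurable_times_ennreal[OF dm fT])
    apply simp
    done
qed

lemma g2_prod:
  assumes [measurable]: "f1 \<in> borel_measurable borel" "f2 \<in> borel_measurable borel"
  shows "(\<integral>\<^sup>+z1. \<integral>\<^sup>+z2. ennreal (h1 z1 * h2 z2 / m) * (f1 (fst z1) * f2 (snd z2)) \<partial>P \<partial>P)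
    = ennreal (1/m) * (\<integral>\<^sup>+z. ennreal (h1 z) * f1 (fst z) \<partial>P) * (\<integral>\<^sup>+z. ennreal (h2 z) * f2 (snd z) \<partial>P)"
proof -
  have e: "ennreal (h1 z1 * h2 z2 / m) * (f1 (fst z1) * f2 (snd z2))
     = (ennreal (1/m) * (ennreal (h1 z1) * f1 (fst z1))) * (ennreal (h2 z2) * f2 (snd z2))" for z1 z2
    using uv_bnd[of z1] uv_bnd[of z2] m_nn
    by (simp add: ennreal_mult[symmetric] mult_ac)
  have "(\<integral>\<^sup>+z1. \<integral>\<^sup>+z2. ennreal (h1 z1 * h2 z2 / m) * (f1 (fst z1) * f2 (snd z2)) \<partial>P \<partial>P)
     = (\<integral>\<^sup>+z1. (ennreal (1/m) * (ennreal (h1 z1) * f1 (fst z1))) * (\<integral>\<^sup>+z2. ennreal (h2 z2) * f2 (snd z2) \<partial>P) \<partial>P)"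
    unfolding e by (subst nn_integral_cmult) auto
  also have "\<dots> = (\<integral>\<^sup>+z1. ennreal (1/m) * (ennreal (h1 z1) * f1 (fst z1)) \<partial>P) * (\<integral>\<^sup>+z2. ennreal (h2 z2) * f2 (snd z2) \<partial>P)"
    by (subst nn_integral_multc) auto
  also have "\<dots> = ennreal (1/m) * (\<integral>\<^sup>+z. ennreal (h1 z) * f1 (fst z) \<partial>P) * (\<integral>\<^sup>+z. ennreal (h2 z) * f2 (snd z) \<partial>P)"
    by (subst nn_integral_cmult) auto
  finally show ?thesis .
qed

lemma h1_zero: "m = 0 \<Longrightarrow> (\<integral>\<^sup>+z. ennreal (h1 z) * f z \<partial>P) = 0"
  by (subst nn_integral_cong_AE[where v="\<lambda>_. 0"]) (use m0_AE in auto)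
lemma h2_zero: "m = 0 \<Longrightarrow> (\<integral>\<^sup>+z. ennreal (h2 z) * f z \<partial>P) = 0"
  by (subst nn_integral_cong_AE[where v="\<lambda>_. 0"]) (use m0_AE in auto)

lemma g2_fst: "f \<in> borel_measurable borel \<Longrightarrow> (\<integral>\<^sup>+z. f (fst z) \<partial>g2) = (\<integral>\<^sup>+z. ennreal (h1 z) * f (fst z) \<partial>P)"
proof -
  assume [measurable]: "f \<in> borel_measurable borel"
  have "(\<integral>\<^sup>+z. f (fst z) \<partial>g2) = ennreal (1/m) * (\<integral>\<^sup>+z. ennreal (h1 z) * f (fst z) \<partial>P) * (\<integral>\<^sup>+z. ennreal (h2 z) * 1 \<partial>P)"
    using g2_prod[of f "\<lambda>_. 1"] by (subst nn_g2) auto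
  also have "\<dots> = (\<integral>\<^sup>+z. ennreal (h1 z) * f (fst z) \<partial>P)"
  proof (cases "m = 0")
    case True then show ?thesis using h1_zero by simp
  next
    case False
    then have "ennreal (1/m) * ennreal m = 1" using m_nn by (simp add: ennreal_mult[symmetric])
    then have "\<And>X. ennreal (1/m) * X * ennreal m = X"
      by (metis mult.assoc mult.commute mult_1)
    then show ?thesis using nn_h2 by simp
  qed
  finally show ?thesis .
qed

lemma g2_snd: "f \<in> borel_measurable borel \<Longrightarrow> (\<integral>\<^sup>+z. f (snd z) \<partial>g2) = (\<integral>\<^sup>+z. ennreal (h2 z) * f (snd z) \<partial>P)"
proof -
  assume [measurable]: "f \<in> borel_measurable borel"
  have "(\<integral>\<^sup>+z. f (snd z) \<partial>g2) = ennreal (1/m) * (\<integral>\<^sup>+z. ennreal (h1 z) * 1 \<partial>P) * (\<integral>\<^sup>+z. ennreal (h2 z) * f (snd z) \<partial>P)"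
    using g2_prod[of "\<lambda>_. 1" f] by (subst nn_g2) auto
  also have "\<dots> = (\<integral>\<^sup>+z. ennreal (h2 z) * f (snd z) \<partial>P)"
  proof (cases "m = 0")
    case True then show ?thesis using h2_zero by simp
  next
    case False
    then have "ennreal (1/m) * ennreal m = 1" using m_nn by (simp add: ennreal_mult[symmetric])
    then have "\<And>X. ennreal (1/m) * ennreal m * X = X"
      by simp
    then show ?thesis using nn_h1 by simp
  qed
  finally show ?thesis .
qed

lemma space_g: "space g1 = UNIV" "space g2 = UNIV"
  using sets_eq_imp_space_eq[OF sets_g(1)] sets_eq_imp_space_eq[OF sets_g(2)] by auto

lemma nn_u: "(\<integral>\<^sup>+z. ennreal (u z) \<partial>P) = 1"
  using int_u uv_bnd by (subst nn_integral_eq_integral) auto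

lemma m_le1: "m \<le> 1"
proof -
  have "m \<le> (\<integral>z. u z \<partial>P)" unfolding m_def
    by (rule integral_mono) (use uv_bnd in \<open>auto simp: h1_def\<close>)
  then show ?thesis using int_u by simp
qed

lemma sub_g1: "subprob_space g1"
proof
  have "emeasure g1 (space g1) = (\<integral>\<^sup>+z. 1 \<partial>g1)" by (simp add: nn_integral_const)
  also have "\<dots> = (\<integral>\<^sup>+z. ennreal (w z) \<partial>P)" by (subst nn_g1) auto
  also have "\<dots> \<le> (\<integral>\<^sup>+z. ennreal (u z) \<partial>P)"
    by (rule nn_integral_mono) (use uv_bnd in auto)
  finally show "emeasure g1 (space g1) \<le> 1" using nn_u by simp
  show "space g1 \<noteq> {}" using space_g by simp
qed

lemma sub_g2: "subprob_space g2"
proof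
  have "emeasure g2 (space g2) = (\<integral>\<^sup>+z. (\<lambda>_. 1) (fst z) \<partial>g2)" by (simp add: nn_integral_const)
  also have "\<dots> = (\<integral>\<^sup>+z. ennreal (h1 z) \<partial>P)" by (subst g2_fst) auto
  finally show "emeasure g2 (space g2) \<le> 1" using nn_h1 m_le1 by simp
  show "space g2 \<noteq> {}" using space_g by simp
qed

definition "G = msum g1 g2"

lemma sets_G[measurable_cong]: "sets G = sets borel"
  unfolding G_def by (rule sets_msum[OF sets_g sub_g1 sub_g2])

lemma nn_G: "f \<in> borel_measurable borel \<Longrightarrow> (\<integral>\<^sup>+z. f z \<partial>G) = (\<integral>\<^sup>+z. f z \<partial>g1) + (\<integral>\<^sup>+z. f z \<partial>g2)"
  unfolding G_def by (rule nn_integral_msum[OF sets_g sub_g1 sub_g2])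

lemma G_fst: "f \<in> borel_measurable borel \<Longrightarrow> (\<integral>\<^sup>+z. f (fst z) \<partial>G) = (\<integral>\<^sup>+z. ennreal (u z) * f (fst z) \<partial>P)"
proof -
  assume f[measurable]: "f \<in> borel_measurable borel"
  have "(\<integral>\<^sup>+z. f (fst z) \<partial>G) = (\<integral>\<^sup>+z. ennreal (w z) * f (fst z) \<partial>P) + (\<integral>\<^sup>+z. ennreal (h1 z) * f (fst z) \<partial>P)"
    by (subst nn_G, simp, subst nn_g1, simp, subst g2_fst, simp_all)
  also have "\<dots> = (\<integral>\<^sup>+z. ennreal (w z) * f (fst z) + ennreal (h1 z) * f (fst z) \<partial>P)"
    by (subst nn_integral_add) auto
  also have "\<dots> = (\<integral>\<^sup>+z. ennreal (u z) * f (fst z) \<partial>P)"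
    by (rule nn_integral_cong) (use uv_bnd in \<open>auto simp: distrib_right[symmetric] ennreal_plus[symmetric] h1_def simp del: ennreal_plus\<close>)
  finally show ?thesis .
qed

lemma G_snd: "f \<in> borel_measurable borel \<Longrightarrow> (\<integral>\<^sup>+z. f (snd z) \<partial>G) = (\<integral>\<^sup>+z. ennreal (v z) * f (snd z) \<partial>P)"
proof -
  assume f[measurable]: "f \<in> borel_measurable borel"
  have "(\<integral>\<^sup>+z. f (snd z) \<partial>G) = (\<integral>\<^sup>+z. ennreal (w z) * f (snd z) \<partial>P) + (\<integral>\<^sup>+z. ennreal (h2 z) * f (snd z) \<partial>P)"
    by (subst nn_G, simp, subst nn_g1, simp, subst g2_snd, simp_all)
  also have "\<dots> = (\<integral>\<^sup>+z. ennreal (w z) * f (snd z) + ennreal (h2 z) * f (snd z) \<partial>P)"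
    by (subst nn_integral_add) auto
  also have "\<dots> = (\<integral>\<^sup>+z. ennreal (v z) * f (snd z) \<partial>P)"
    by (rule nn_integral_cong) (use uv_bnd in \<open>auto simp: distrib_right[symmetric] ennreal_plus[symmetric] h2_def simp del: ennreal_plus\<close>)
  finally show ?thesis .
qed

lemma margG1: "distr G borel fst = reweight a Q"
proof (rule measure_eqI)
  show "sets (distr G borel fst) = sets (reweight a Q)" by (simp add: reweight_def sQ)
  fix A assume "A \<in> sets (distr G borel fst)"
  then have A[measurable]: "A \<in> sets borel" by simp
  have "emeasure (distr G borel fst) A = (\<integral>\<^sup>+x. indicator A x \<partial>distr G borel fst)" by simp
  also have "\<dots> = (\<integral>\<^sup>+z. indicator A (fst z) \<partial>G)"
    by (subst nn_integral_distr) (auto simp: measurable_cong_sets[OF sets_G refl])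
  also have "\<dots> = (\<integral>\<^sup>+z. ennreal (a (fst z) / Z) * indicator A (fst z) \<partial>P)"
    by (subst G_fst) (auto simp: u_def)
  also have "\<dots> = (\<integral>\<^sup>+x. ennreal (a x / Z) * indicator A x \<partial>Q)"
    by (rule nn_fst) measurable
  also have "\<dots> = emeasure (reweight a Q) A"
    unfolding reweight_def Z_def[symmetric] by (subst emeasure_density) (auto simp: sQ)
  finally show "emeasure (distr G borel fst) A = emeasure (reweight a Q) A" .
qed

lemma margG2: "distr G borel snd = reweight a Qh"
proof (rule measure_eqI)
  show "sets (distr G borel snd) = sets (reweight a Qh)" by (simp add: reweight_def sQh)
  fix A assume "A \<in> sets (distr G borel snd)"
  then have A[measurable]: "A \<in> sets borel" by simp
  have "emeasure (distr G borel snd) A = (\<integral>\<^sup>+x. indicator A x \<partial>distr G borel snd)" by simp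
  also have "\<dots> = (\<integral>\<^sup>+z. indicator A (snd z) \<partial>G)"
    by (subst nn_integral_distr) (auto simp: measurable_cong_sets[OF sets_G refl])
  also have "\<dots> = (\<integral>\<^sup>+z. ennreal (a (snd z) / Zh) * indicator A (snd z) \<partial>P)"
    by (subst G_snd) (auto simp: v_def)
  also have "\<dots> = (\<integral>\<^sup>+x. ennreal (a x / Zh) * indicator A x \<partial>Qh)"
    by (rule nn_snd) measurable
  also have "\<dots> = emeasure (reweight a Qh) A"
    unfolding reweight_def Zh_def[symmetric] by (subst emeasure_density) (auto simp: sQh)
  finally show "emeasure (distr G borel snd) A = emeasure (reweight a Qh) A" .
qed

lemma prob_G: "prob_space G"
proof (rule prob_spaceI)
  have "emeasure G (space G) = (\<integral>\<^sup>+z. (\<lambda>_. 1) (fst z) \<partial>G)" by (simp add: nn_integral_const)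
  also have "\<dots> = (\<integral>\<^sup>+z. ennreal (u z) \<partial>P)" by (subst G_fst) auto
  finally show "emeasure G (space G) = 1" using nn_u by simp
qed

lemma G_coupling: "G \<in> couplings (reweight a Q) (reweight a Qh)"
  unfolding couplings_def using sets_G prob_G margG1 margG2 by auto

lemma cost1: "(\<integral>\<^sup>+z. ennreal ((dd z)\<^sup>2) \<partial>g1) \<le> ennreal (2 * C / a0 * D)"
proof -
  have "(\<integral>\<^sup>+z. ennreal ((dd z)\<^sup>2) \<partial>g1) = (\<integral>\<^sup>+z. ennreal (w z) * ennreal ((dd z)\<^sup>2) \<partial>P)"
    by (subst nn_g1) auto
  also have "\<dots> \<le> (\<integral>\<^sup>+z. ennreal (2 * C / a0 * dd z) \<partial>P)"
    using dd_AE
  proof (intro nn_integral_mono_AE, eventually_elim)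
    case (elim z)
    have "w z * dd z \<le> 1 / a0 * (2 * C)"
      using uv_bnd[of z] dd_nn[of z] elim a0 by (intro mult_mono) auto
    then have "(w z * dd z) * dd z \<le> (1 / a0 * (2 * C)) * dd z"
      using dd_nn[of z] by (rule mult_right_mono)
    then have "w z * (dd z)\<^sup>2 \<le> 2 * C / a0 * dd z" by (simp add: power2_eq_square mult_ac)
    then show ?case using uv_bnd[of z] by (simp add: ennreal_mult[symmetric] ennreal_leI)
  qed
  also have "\<dots> = ennreal (2 * C / a0 * D)"
    using C a0 dd_nn by (subst nn_integral_eq_integral) (auto simp: D_def)
  finally show ?thesis .
qed

lemma cost2: "(\<integral>\<^sup>+z. ennreal ((dd z)\<^sup>2) \<partial>g2) \<le> ennreal (4 * C\<^sup>2 * m)"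
proof -
  have "(\<integral>\<^sup>+z. ennreal ((dd z)\<^sup>2) \<partial>g2) =
     (\<integral>\<^sup>+z1. \<integral>\<^sup>+z2. ennreal (h1 z1 * h2 z2 / m) * ennreal ((dist (fst z1) (snd z2))\<^sup>2) \<partial>P \<partial>P)"
    by (subst nn_g2) (auto simp: dd_def)
  also have "\<dots> \<le> (\<integral>\<^sup>+z1. \<integral>\<^sup>+z2. ennreal (h1 z1 * h2 z2 / m) * ((\<lambda>_. ennreal (4 * C\<^sup>2)) (fst z1) * (\<lambda>_. 1) (snd z2)) \<partial>P \<partial>P)"
    using AE_ball
  proof (intro nn_integral_mono_AE, eventually_elim)
    case (elim z1)
    show ?case using AE_ball
    proof (intro nn_integral_mono_AE, eventually_elim)
      case (elim z2)
      have "dist (fst z1) (snd z2) \<le> dist (fst z1) 0 + dist 0 (snd z2)" by (rule dist_triangle)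
      also have "\<dots> \<le> C + C" using \<open>fst z1 \<in> cball 0 C \<and> _\<close> elim by (auto simp: dist_commute)
      finally have "(dist (fst z1) (snd z2))\<^sup>2 \<le> (2 * C)\<^sup>2" by (intro power_mono) auto
      then show ?case by (intro mult_left_mono) (auto simp: power_mult_distrib)
    qed
  qed
  also have "\<dots> = ennreal (1/m) * (\<integral>\<^sup>+z. ennreal (h1 z) * ennreal (4 * C\<^sup>2) \<partial>P) * (\<integral>\<^sup>+z. ennreal (h2 z) * 1 \<partial>P)"
    by (rule g2_prod) auto
  also have "\<dots> = ennreal (4 * C\<^sup>2 * m)"
  proof (cases "m = 0")
    case True then show ?thesis using h1_zero by simp
  next
    case False
    have "(\<integral>\<^sup>+z. ennreal (h1 z) * ennreal (4 * C\<^sup>2) \<partial>P) = ennreal m * ennreal (4 * C\<^sup>2)"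
      using nn_h1 by (subst nn_integral_multc) auto
    then show ?thesis using nn_h2 False m_nn
      by (simp add: ennreal_mult[symmetric] del: ennreal_mult_left_cong ennreal_mult_right_cong)
  qed
  finally show ?thesis .
qed

lemma cost: "(\<integral>\<^sup>+z. ennreal ((dist (fst z) (snd z))\<^sup>2) \<partial>G) \<le> ennreal (2 * C * (1 + 2 * C * La) / a0 * D)"
proof -
  have "(\<integral>\<^sup>+z. ennreal ((dist (fst z) (snd z))\<^sup>2) \<partial>G) = (\<integral>\<^sup>+z. ennreal ((dd z)\<^sup>2) \<partial>G)"
    by (simp add: dd_def)
  also have "\<dots> = (\<integral>\<^sup>+z. ennreal ((dd z)\<^sup>2) \<partial>g1) + (\<integral>\<^sup>+z. ennreal ((dd z)\<^sup>2) \<partial>g2)"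
    by (subst nn_G) auto
  also have "\<dots> \<le> ennreal (2 * C / a0 * D) + ennreal (4 * C\<^sup>2 * m)"
    by (intro add_mono cost1 cost2)
  also have "\<dots> = ennreal (2 * C / a0 * D + 4 * C\<^sup>2 * m)"
    using C a0 D_nn m_nn by (subst ennreal_plus) auto
  also have "\<dots> \<le> ennreal (2 * C * (1 + 2 * C * La) / a0 * D)"
  proof (rule ennreal_leI)
    have "4 * C\<^sup>2 * m \<le> 4 * C\<^sup>2 * (La * D / a0)"
      using m_bound C by (intro mult_left_mono) auto
    also have "2 * C / a0 * D + 4 * C\<^sup>2 * (La * D / a0) = 2 * C * (1 + 2 * C * La) / a0 * D"
      using a0 by (simp add: field_simps power2_eq_square)
    finally show "2 * C / a0 * D + 4 * C\<^sup>2 * m \<le> 2 * C * (1 + 2 * C * La) / a0 * D" by simp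
  qed
  finally show ?thesis .
qed

lemma dd2_int[simp]: "integrable P (\<lambda>z. (dd z)\<^sup>2)"
proof (rule P.integrable_const_bound[where B="(2*C)\<^sup>2"])
  show "AE z in P. norm ((dd z)\<^sup>2) \<le> (2 * C)\<^sup>2"
    using dd_AE
  proof eventually_elim
    case (elim z)
    have "(dd z)\<^sup>2 \<le> (2*C)\<^sup>2" by (rule power_mono[OF elim dd_nn])
    then show ?case by simp
  qed
qed measurable

lemma D_sq: "D\<^sup>2 \<le> (\<integral>z. (dd z)\<^sup>2 \<partial>P)"
  using P.variance_positive[of dd] P.variance_eq[of dd] by (simp add: D_def)

lemma nn_dd2: "(\<integral>\<^sup>+z. ennreal ((dist (fst z) (snd z))\<^sup>2) \<partial>P) = ennreal (\<integral>z. (dd z)\<^sup>2 \<partial>P)"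
proof -
  have "integrable P (\<lambda>z. (dist (fst z) (snd z))\<^sup>2)" using dd2_int unfolding dd_def .
  then show ?thesis by (subst nn_integral_eq_integral[symmetric]) (auto simp: dd_def)
qed

lemma cost_fin: "(\<integral>\<^sup>+z. ennreal ((dist (fst z) (snd z))\<^sup>2) \<partial>P) \<le> ennreal ((2*C)\<^sup>2)"
proof -
  have "(\<integral>\<^sup>+z. ennreal ((dist (fst z) (snd z))\<^sup>2) \<partial>P) \<le> (\<integral>\<^sup>+z. ennreal ((2*C)\<^sup>2) \<partial>P)"
    using dd_AE
  proof (intro nn_integral_mono_AE, eventually_elim)
    case (elim z)
    have "dd z \<le> 2 * C" using elim by auto
    then have "(dd z)\<^sup>2 \<le> (2*C)\<^sup>2" by (rule power_mono[OF _ dd_nn])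
    then show ?case by (intro ennreal_leI) (simp add: dd_def)
  qed
  then show ?thesis by (simp add: P.emeasure_space_1)
qed

lemma final_pi:
  "ennreal (((W2 (reweight a Q) (reweight a Qh))\<^sup>2 / (2 * C * (1 + 2 * C * La) / a0))\<^sup>2)
     \<le> (\<integral>\<^sup>+z. ennreal ((dist (fst z) (snd z))\<^sup>2) \<partial>P)"
proof -
  define K where "K = 2 * C * (1 + 2 * C * La) / a0"
  have "0 < 1 + 2*C*La" using C La_nn by (smt (verit) mult_nonneg_nonneg)
  then have K: "0 < K" unfolding K_def using C a0 by (intro divide_pos_pos mult_pos_pos) auto
  define I where "I = (INF K \<in> couplings (reweight a Q) (reweight a Qh).
       \<integral>\<^sup>+ z. ennreal ((dist (fst z) (snd z))\<^sup>2) \<partial>K)"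
  have "I \<le> ennreal (K * D)"
    unfolding I_def K_def using G_coupling cost by (meson INF_lower2)
  then have "enn2real I \<le> K * D" using K D_nn by (intro enn2real_leI) auto
  moreover have "(W2 (reweight a Q) (reweight a Qh))\<^sup>2 = enn2real I"
    unfolding W2_def I_def by simp
  ultimately have "(W2 (reweight a Q) (reweight a Qh))\<^sup>2 / K \<le> D"
    using K by (simp add: divide_le_eq mult.commute)
  moreover have "0 \<le> (W2 (reweight a Q) (reweight a Qh))\<^sup>2 / K" using K by simp
  ultimately have "((W2 (reweight a Q) (reweight a Qh))\<^sup>2 / K)\<^sup>2 \<le> D\<^sup>2"
    by (intro power_mono) auto
  also have "\<dots> \<le> (\<integral>z. (dd z)\<^sup>2 \<partial>P)" by (rule D_sq)
  finally show ?thesis unfolding nn_dd2 K_def[symmetric] by (intro ennreal_leI)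
qed

end



lemma prod_coupling:
  fixes Q Qh :: "'a::euclidean_space measure"
  assumes Q: "prob_space Q" and sQ: "sets Q = sets borel"
    and Qh: "prob_space Qh" and sQh: "sets Qh = sets borel"
  shows "Q \<Otimes>\<^sub>M Qh \<in> couplings Q Qh"
proof -
  interpret Q: prob_space Q by (rule Q)
  interpret Qh: prob_space Qh by (rule Qh)
  have s: "sets (Q \<Otimes>\<^sub>M Qh) = sets borel"
    using sets_pair_measure_cong[OF sQ sQh] by (metis borel_prod)
  have "distr (Q \<Otimes>\<^sub>M Qh) borel fst = distr (Q \<Otimes>\<^sub>M Qh) Q fst"
    by (rule distr_cong) (auto simp: sQ)
  also have "\<dots> = Q" by (rule Qh.distr_pair_fst)
  finally have m1: "distr (Q \<Otimes>\<^sub>M Qh) borel fst = Q" .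
  have m2: "distr (Q \<Otimes>\<^sub>M Qh) borel snd = Qh"
  proof (rule measure_eqI)
    show "sets (distr (Q \<Otimes>\<^sub>M Qh) borel snd) = sets Qh" by (simp add: sQh)
    fix A assume "A \<in> sets (distr (Q \<Otimes>\<^sub>M Qh) borel snd)"
    then have A: "A \<in> sets borel" by simp
    have sm: "snd \<in> (Q \<Otimes>\<^sub>M Qh) \<rightarrow>\<^sub>M borel"
      using measurable_snd[of Q Qh] by (simp add: measurable_cong_sets[OF refl sQh])
    have "emeasure (distr (Q \<Otimes>\<^sub>M Qh) borel snd) A = emeasure (Q \<Otimes>\<^sub>M Qh) (snd -` A \<inter> space (Q \<Otimes>\<^sub>M Qh))"
      by (rule emeasure_distr[OF sm A])
    also have "snd -` A \<inter> space (Q \<Otimes>\<^sub>M Qh) = space Q \<times> A"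
      using sets_eq_imp_space_eq[OF sQ] sets_eq_imp_space_eq[OF sQh] by (auto simp: space_pair_measure)
    also have "emeasure (Q \<Otimes>\<^sub>M Qh) (space Q \<times> A) = emeasure Q (space Q) * emeasure Qh A"
      using A sQh by (intro Qh.emeasure_pair_measure_Times) auto
    finally show "emeasure (distr (Q \<Otimes>\<^sub>M Qh) borel snd) A = emeasure Qh A"
      by (simp add: Q.emeasure_space_1)
  qed
  show ?thesis unfolding couplings_def
    using s m1 m2 prob_space_pair[OF Q Qh] by auto
qed

theorem lemmaB7:
  fixes Q Qh :: "'a::euclidean_space measure"
    and a :: "'a \<Rightarrow> real"
    and C a0 La :: real
  assumes "C > 0"
    and "prob_space Q" and "sets Q = sets borel"
    and "prob_space Qh" and "sets Qh = sets borel"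
    and "AE x in Q. x \<in> cball 0 C"
    and "AE x in Qh. x \<in> cball 0 C"
    and "a \<in> borel_measurable borel"
    and "\<forall>x \<in> cball 0 C. 0 \<le> a x \<and> a x \<le> 1"
    and "a0 > 0"
    and "\<forall>x \<in> cball 0 C. a x \<ge> a0"
    and "La-lipschitz_on (cball 0 C) a"
  shows "W2 (reweight a Q) (reweight a Qh)
           \<le> sqrt (2 * C * (1 + 2 * C * La) / a0 * W2 Q Qh)"
proof -
  have "0 \<in> cball (0::'a) C" using assms(1) by simp
  then have "a0 \<le> a 0" "a 0 \<le> 1" using assms(9,11) by auto
  then have a01: "a0 \<le> 1" by linarith
  define a' where "a' x = (if x \<in> cball 0 C then a x else a0)" for x
  have a'm: "a' \<in> borel_measurable borel"
    unfolding a'_def[abs_def] by (intro measurable_If_set assms(8) measurable_const) auto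
  have a'lo: "\<And>x. a0 \<le> a' x" and a'hi: "\<And>x. a' x \<le> 1"
    using assms(9,11) a01 by (auto simp: a'_def)
  have lip': "La-lipschitz_on (cball 0 C) a'"
    using assms(12) by (auto simp: lipschitz_on_def a'_def)
  have am: "a \<in> borel_measurable Q" "a \<in> borel_measurable Qh" "a' \<in> borel_measurable Q" "a' \<in> borel_measurable Qh"
    using assms(8) a'm by (auto simp: measurable_cong_sets[OF assms(3) refl] measurable_cong_sets[OF assms(5) refl])
  have RQ: "reweight a Q = reweight a' Q"
  proof -
    have ae: "AE x in Q. a x = a' x" using assms(6) by eventually_elim (auto simp: a'_def)
    have "(\<integral>y. a y \<partial>Q) = (\<integral>y. a' y \<partial>Q)" by (rule integral_cong_AE) (use am ae in auto)
    then show ?thesis unfolding reweight_def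
      by (intro density_cong) (use am ae in auto)
  qed
  have RQh: "reweight a Qh = reweight a' Qh"
  proof -
    have ae: "AE x in Qh. a x = a' x" using assms(7) by eventually_elim (auto simp: a'_def)
    have "(\<integral>y. a y \<partial>Qh) = (\<integral>y. a' y \<partial>Qh)" by (rule integral_cong_AE) (use am ae in auto)
    then show ?thesis unfolding reweight_def
      by (intro density_cong) (use am ae in auto)
  qed
  have loc: "B7 Q Qh a' C a0 La P" if "P \<in> couplings Q Qh" for P
    by (rule B7.intro[OF assms(1-7) a'm a'lo a'hi assms(10) lip' that])
  define K where "K = 2 * C * (1 + 2 * C * La) / a0"
  define X where "X = ((W2 (reweight a Q) (reweight a Qh))\<^sup>2 / K)\<^sup>2"
  define I where "I = (INF K \<in> couplings Q Qh. \<integral>\<^sup>+ z. ennreal ((dist (fst z) (snd z))\<^sup>2) \<partial>K)"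
  have "ennreal X \<le> I"
    unfolding I_def X_def K_def RQ RQh by (rule INF_greatest) (rule B7.final_pi[OF loc])
  moreover have "I < top"
  proof -
    have pc: "Q \<Otimes>\<^sub>M Qh \<in> couplings Q Qh" by (rule prod_coupling) (use assms in auto)
    have "I \<le> ennreal ((2*C)\<^sup>2)"
      unfolding I_def by (rule INF_lower2[OF pc]) (rule B7.cost_fin[OF loc[OF pc]])
    then show ?thesis using le_less_trans by fastforce
  qed
  ultimately have "enn2real (ennreal X) \<le> enn2real I" by (rule enn2real_mono)
  then have XI: "X \<le> enn2real I" by (simp add: X_def)
  have W2Q: "W2 Q Qh = sqrt (enn2real I)" unfolding W2_def I_def ..
  have "0 < 1 + 2*C*La" using assms(1) lipschitz_on_nonneg[OF assms(12)] by (smt (verit) mult_nonneg_nonneg)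
  then have K: "0 < K" unfolding K_def using assms(1,10) by (intro divide_pos_pos mult_pos_pos) auto
  have "(W2 (reweight a Q) (reweight a Qh))\<^sup>2 / K \<le> sqrt (enn2real I)"
    using XI unfolding X_def by (intro real_le_rsqrt) 
  then have "(W2 (reweight a Q) (reweight a Qh))\<^sup>2 \<le> K * W2 Q Qh"
    using K unfolding W2Q by (simp add: divide_le_eq mult.commute)
  then have "sqrt ((W2 (reweight a Q) (reweight a Qh))\<^sup>2) \<le> sqrt (K * W2 Q Qh)"
    by (rule real_sqrt_le_mono)
  moreover have "0 \<le> W2 (reweight a Q) (reweight a Qh)" by (simp add: W2_def)
  ultimately show ?thesis unfolding K_def by simp
qed

end
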